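(* Let $G$ be a connected graph on at least $3$ vertices and let $G'$ be obtained from $G$ by subdividing an edge $e$. Then $rx_3(G')\le rx_3(G)+1$.
   Context: Subdividing an edge $e=uw$ means deleting $e$, adding a new vertex $x$, and adding the edges $xu$ and $xw$. An edge coloring may give adjacent edges the same color; a tree is rainbow if its edges have pairwise distinct colors. For a connected graph on at least $3$ vertices, $rx_3$ is the minimum number of colors in an edge coloring such that every set of $3$ vertices lies in some rainbow tree. *)

theory Defs
  imports Main
begin

definition simple_graph :: "'a set \<Rightarrow> 'a set set \<Rightarrow> bool" where
  "simple_graph V E \<longleftrightarrow> finite V \<and>
     (\<forall>e\<in>E. \<exists>u v. e = {u, v} \<and> u \<noteq> v \<and> u \<in> V \<and> v \<in> V)"

definition adj_rel :: "'a set set \<Rightarrow> ('a \<times> 'a) set" where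
  "adj_rel E = {(u, v). {u, v} \<in> E}"

definition connected_graph :: "'a set \<Rightarrow> 'a set set \<Rightarrow> bool" where
  "connected_graph V E \<longleftrightarrow> V \<noteq> {} \<and> (\<forall>u\<in>V. \<forall>v\<in>V. (u, v) \<in> (adj_rel E)\<^sup>*)"

definition has_cycle :: "'a set set \<Rightarrow> bool" where
  "has_cycle E \<longleftrightarrow> (\<exists>vs. length vs \<ge> 3 \<and> distinct vs \<and>
      (\<forall>i. Suc i < length vs \<longrightarrow> {vs ! i, vs ! Suc i} \<in> E) \<and> {last vs, hd vs} \<in> E)"

definition is_tree :: "'a set \<Rightarrow> 'a set set \<Rightarrow> bool" where
  "is_tree W T \<longleftrightarrow> simple_graph W T \<and> connected_graph W T \<and> \<not> has_cycle T"

definition rainbow_3_colouring :: "'a set \<Rightarrow> 'a set set \<Rightarrow> ('a set \<Rightarrow> nat) \<Rightarrow> nat \<Rightarrow> bool" where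
  "rainbow_3_colouring V E c k \<longleftrightarrow> c ` E \<subseteq> {..<k} \<and>
     (\<forall>S. S \<subseteq> V \<and> card S = 3 \<longrightarrow>
        (\<exists>W T. W \<subseteq> V \<and> T \<subseteq> E \<and> S \<subseteq> W \<and> is_tree W T \<and> inj_on c T))"

definition rx3 :: "'a set \<Rightarrow> 'a set set \<Rightarrow> nat" where
  "rx3 V E = (LEAST k. \<exists>c. rainbow_3_colouring V E c k)"

definition subdivide_V :: "'a set \<Rightarrow> 'a \<Rightarrow> 'a set" where
  "subdivide_V V x = insert x V"

definition subdivide_E :: "'a set set \<Rightarrow> 'a \<Rightarrow> 'a \<Rightarrow> 'a \<Rightarrow> 'a set set" where
  "subdivide_E E u w x = (E - {{u, w}}) \<union> {{x, u}, {x, w}}"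

end

theory Submission
  imports Defs
begin


definition cyc :: "'a set set \<Rightarrow> 'a list \<Rightarrow> bool" where
  "cyc T vs \<longleftrightarrow> (\<forall>i<length vs. {vs!i, vs!(Suc i mod length vs)} \<in> T)"

lemma has_cycle_iff: "has_cycle T \<longleftrightarrow> (\<exists>vs. length vs \<ge> 3 \<and> distinct vs \<and> cyc T vs)"
proof
  assume "has_cycle T"
  then obtain vs where l: "length vs \<ge> 3" "distinct vs"
    and a: "\<forall>i. Suc i < length vs \<longrightarrow> {vs ! i, vs ! Suc i} \<in> T" and b: "{last vs, hd vs} \<in> T"
    unfolding has_cycle_def by blast
  have "cyc T vs" unfolding cyc_def
  proof (intro allI impI)
    fix i assume i: "i < length vs"
    show "{vs!i, vs!(Suc i mod length vs)} \<in> T"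
    proof (cases "Suc i < length vs")
      case True thus ?thesis using a by simp
    next
      case False
      then have s: "Suc i = length vs" using i by auto
      then have "i = length vs - 1" "Suc i mod length vs = 0" by auto
      have ne: "vs \<noteq> []" using l by auto
      thus ?thesis using b ne \<open>i = length vs - 1\<close> \<open>Suc i mod length vs = 0\<close> by (simp add: last_conv_nth hd_conv_nth)
    qed
  qed
  thus "\<exists>vs. length vs \<ge> 3 \<and> distinct vs \<and> cyc T vs" using l by blast
next
  assume "\<exists>vs. length vs \<ge> 3 \<and> distinct vs \<and> cyc T vs"
  then obtain vs where l: "length vs \<ge> 3" "distinct vs" and c: "cyc T vs" by blast
  have a: "\<forall>i. Suc i < length vs \<longrightarrow> {vs ! i, vs ! Suc i} \<in> T"
    using c unfolding cyc_def by (metis Suc_lessD mod_less)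
  have "{vs!(length vs - 1), vs!(Suc (length vs - 1) mod length vs)} \<in> T"
    using c l unfolding cyc_def by simp
  moreover have "Suc (length vs - 1) = length vs" "vs \<noteq> []" using l by auto
  ultimately have b: "{last vs, hd vs} \<in> T" by (simp add: last_conv_nth hd_conv_nth)
  show "has_cycle T" unfolding has_cycle_def using a b l by blast
qed

lemma cyc_rotate: assumes "cyc T vs" shows "cyc T (rotate k vs)"
  unfolding cyc_def
proof (intro allI impI)
  let ?n = "length vs"
  fix i assume i: "i < length (rotate k vs)"
  hence i': "i < ?n" by simp
  hence n: "?n > 0" by linarith
  define j where "j = (k + i) mod ?n"
  have j: "j < ?n" using n by (simp add: j_def)
  have e: "(k + Suc i mod ?n) mod ?n = Suc j mod ?n"
    by (simp add: j_def mod_Suc_eq mod_add_right_eq)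
  have r1: "rotate k vs ! i = vs ! j" using nth_rotate[of i vs k] i' j_def by simp
  have r2: "rotate k vs ! (Suc i mod ?n) = vs ! (Suc j mod ?n)"
    using nth_rotate[of "Suc i mod ?n" vs k] n e by simp
  have "{vs!j, vs!(Suc j mod ?n)} \<in> T" using assms j unfolding cyc_def by blast
  thus "{rotate k vs ! i, rotate k vs ! (Suc i mod length (rotate k vs))} \<in> T"
    using r1 r2 by simp
qed

lemma rot_to_front:
  assumes "length vs \<ge> 3" "distinct vs" "cyc T vs" "x \<in> set vs"
  shows "\<exists>ys. length ys = length vs \<and> distinct ys \<and> cyc T ys \<and> ys!0 = x"
proof -
  obtain i where i: "i < length vs" "vs!i = x" using assms(4) by (metis in_set_conv_nth)
  have "0 < length vs" using i by linarith
  then have "rotate i vs ! 0 = vs!((i+0) mod length vs)" by (rule nth_rotate)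
  then have "rotate i vs ! 0 = x" using i by simp
  thus ?thesis using assms cyc_rotate by (metis distinct_rotate length_rotate)
qed

lemma cyc_nbrs: assumes "cyc E vs" "length vs \<ge> 3"
  shows "{vs!0, vs!1} \<in> E" "{vs!(length vs - 1), vs!0} \<in> E"
proof -
  show "{vs!0, vs!1} \<in> E" using assms unfolding cyc_def
    by (metis One_nat_def Suc_le_lessD le_trans less_imp_le_nat mod_less numeral_3_eq_3 zero_less_Suc)
  have "{vs!(length vs - 1), vs!(Suc (length vs - 1) mod length vs)} \<in> E"
    using assms unfolding cyc_def by simp
  moreover have "Suc (length vs - 1) = length vs" using assms by simp
  ultimately show "{vs!(length vs - 1), vs!0} \<in> E" by simp
qed


lemma edge_vertices: "simple_graph W T \<Longrightarrow> {a, b} \<in> T \<Longrightarrow> a \<in> W \<and> b \<in> W"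
  unfolding simple_graph_def by (metis doubleton_eq_iff)

lemma edge_ne: "simple_graph W T \<Longrightarrow> {a, b} \<in> T \<Longrightarrow> a \<noteq> b"
  unfolding simple_graph_def by (smt (verit) doubleton_eq_iff)

lemma edges_avoid: "simple_graph W T \<Longrightarrow> x \<notin> W \<Longrightarrow> e \<in> T \<Longrightarrow> x \<notin> e"
  unfolding simple_graph_def by auto

lemma cyc_mono: "cyc T vs \<Longrightarrow> (\<And>i. i < length vs \<Longrightarrow> {vs!i, vs!(Suc i mod length vs)} \<in> T \<Longrightarrow> {vs!i, vs!(Suc i mod length vs)} \<in> T')
   \<Longrightarrow> cyc T' vs"
  unfolding cyc_def by blast

lemma leaf_tree:
  assumes t: "is_tree W T" and w: "w \<in> W" and x: "x \<notin> W"
  shows "is_tree (insert x W) (insert {x, w} T)"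
proof -
  have sg: "simple_graph W T" and cg: "connected_graph W T" and nc: "\<not> has_cycle T"
    using t unfolding is_tree_def by auto
  have xw: "x \<noteq> w" using w x by auto
  have sg': "simple_graph (insert x W) (insert {x, w} T)"
    unfolding simple_graph_def
  proof (intro conjI ballI)
    show "finite (insert x W)" using sg unfolding simple_graph_def by simp
  next
    fix e assume "e \<in> insert {x, w} T"
    then consider "e = {x, w}" | "e \<in> T" by blast
    then show "\<exists>a b. e = {a, b} \<and> a \<noteq> b \<and> a \<in> insert x W \<and> b \<in> insert x W"
    proof cases
      case 1 thus ?thesis using xw w by blast
    next
      case 2
      then obtain a b where "e = {a, b} \<and> a \<noteq> b \<and> a \<in> W \<and> b \<in> W" using sg unfolding simple_graph_def by blast
      thus ?thesis by blast
    qed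
  qed
  have sub: "adj_rel T \<subseteq> adj_rel (insert {x, w} T)" unfolding adj_rel_def by auto
  have r: "(adj_rel T)\<^sup>* \<subseteq> (adj_rel (insert {x, w} T))\<^sup>*" using sub by (rule rtrancl_mono)
  have xw1: "(x, w) \<in> adj_rel (insert {x, w} T)" unfolding adj_rel_def by auto
  have xw2: "(w, x) \<in> adj_rel (insert {x, w} T)" unfolding adj_rel_def by (auto simp: insert_commute)
  have cg': "connected_graph (insert x W) (insert {x, w} T)"
    unfolding connected_graph_def
  proof (intro conjI ballI)
    fix p q assume p: "p \<in> insert x W" and q: "q \<in> insert x W"
    have W: "\<And>p q. p \<in> W \<Longrightarrow> q \<in> W \<Longrightarrow> (p, q) \<in> (adj_rel (insert {x, w} T))\<^sup>*"
      using cg r unfolding connected_graph_def by blast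
    show "(p, q) \<in> (adj_rel (insert {x, w} T))\<^sup>*"
    proof (cases "p = x")
      case True
      show ?thesis
      proof (cases "q = x")
        case True thus ?thesis using \<open>p = x\<close> by simp
      next
        case False
        then have "q \<in> W" using q by simp
        thus ?thesis using True W[OF w] xw1 by (meson converse_rtrancl_into_rtrancl)
      qed
    next
      case False
      then have pW: "p \<in> W" using p by simp
      show ?thesis
      proof (cases "q = x")
        case True thus ?thesis using W[OF pW w] xw2 by (meson rtrancl_into_rtrancl)
      next
        case False thus ?thesis using W[OF pW] q by simp
      qed
    qed
  qed simp
  have nc': "\<not> has_cycle (insert {x, w} T)"
  proof
    assume "has_cycle (insert {x, w} T)"
    then obtain vs where l: "length vs \<ge> 3" "distinct vs" and c: "cyc (insert {x, w} T) vs"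
      unfolding has_cycle_iff by blast
    show False
    proof (cases "x \<in> set vs")
      case True
      then obtain ys where y: "length ys = length vs" "distinct ys" "cyc (insert {x, w} T) ys" "ys!0 = x"
        using rot_to_front[OF l c] by blast
      have e1: "{x, ys!1} \<in> insert {x, w} T" and e2: "{ys!(length ys - 1), x} \<in> insert {x, w} T"
        using cyc_nbrs[OF y(3)] y(1,4) l(1) by simp_all
      have "{x, ys!1} \<notin> T" using edges_avoid[OF sg x, of "{x, ys!1}"] by blast
      moreover have "{ys!(length ys - 1), x} \<notin> T" using edges_avoid[OF sg x, of "{ys!(length ys - 1), x}"] by blast
      ultimately have "{x, ys!1} = {x, w}" "{ys!(length ys - 1), x} = {x, w}" using e1 e2 by simp_all
      then have "ys!1 = w" "ys!(length ys - 1) = w" using xw by (simp_all add: doubleton_eq_iff)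
      moreover have "1 \<noteq> length ys - 1" "1 < length ys" "length ys - 1 < length ys" using y l by auto
      ultimately show False using y(2) by (metis nth_eq_iff_index_eq)
    next
      case False
      have "cyc T vs"
      proof (rule cyc_mono[OF c])
        fix i assume i: "i < length vs" and e: "{vs!i, vs!(Suc i mod length vs)} \<in> insert {x, w} T"
        have "0 < length vs" using i by linarith
        then have "Suc i mod length vs < length vs" by (rule mod_less_divisor)
        then have "vs!i \<in> set vs" "vs!(Suc i mod length vs) \<in> set vs" using i by (auto simp del: mod_less_divisor)
        then have "{vs!i, vs!(Suc i mod length vs)} \<noteq> {x, w}"
        proof -
          assume a: "vs!i \<in> set vs" "vs!(Suc i mod length vs) \<in> set vs"
          show ?thesis
          proof
            assume "{vs!i, vs!(Suc i mod length vs)} = {x, w}"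
            then have "x \<in> {vs!i, vs!(Suc i mod length vs)}" by simp
            thus False using a False by auto
          qed
        qed
        thus "{vs!i, vs!(Suc i mod length vs)} \<in> T" using e by auto
      qed
      thus False using nc l unfolding has_cycle_iff by blast
    qed
  qed
  show ?thesis unfolding is_tree_def using sg' cg' nc' by blast
qed


lemma sub_tree:
  assumes t: "is_tree W T" and uw: "{u, w} \<in> T" and x: "x \<notin> W"
  shows "is_tree (insert x W) ((T - {{u, w}}) \<union> {{x, u}, {x, w}})"
proof -
  let ?T = "(T - {{u, w}}) \<union> {{x, u}, {x, w}}"
  have sg: "simple_graph W T" and cg: "connected_graph W T" and nc: "\<not> has_cycle T"
    using t unfolding is_tree_def by auto
  have uW: "u \<in> W" and wW: "w \<in> W" using edge_vertices[OF sg uw] by auto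
  have unw: "u \<noteq> w" using edge_ne[OF sg uw] .
  have xu: "x \<noteq> u" and xw: "x \<noteq> w" using uW wW x by auto
  have sg': "simple_graph (insert x W) ?T"
    unfolding simple_graph_def
  proof (intro conjI ballI)
    show "finite (insert x W)" using sg unfolding simple_graph_def by simp
  next
    fix e assume "e \<in> ?T"
    then consider "e = {x, u}" | "e = {x, w}" | "e \<in> T" by blast
    then show "\<exists>a b. e = {a, b} \<and> a \<noteq> b \<and> a \<in> insert x W \<and> b \<in> insert x W"
    proof cases
      case 1 thus ?thesis using xu uW by blast
    next
      case 2 thus ?thesis using xw wW by blast
    next
      case 3
      then obtain a b where "e = {a, b} \<and> a \<noteq> b \<and> a \<in> W \<and> b \<in> W" using sg unfolding simple_graph_def by blast
      thus ?thesis by blast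
    qed
  qed
  have a1: "(u, x) \<in> adj_rel ?T" "(x, u) \<in> adj_rel ?T" "(w, x) \<in> adj_rel ?T" "(x, w) \<in> adj_rel ?T"
    unfolding adj_rel_def by (auto simp: insert_commute)
  have sub: "adj_rel T \<subseteq> (adj_rel ?T)\<^sup>*"
  proof
    fix p assume "p \<in> adj_rel T"
    then obtain a b where p: "p = (a, b)" and e: "{a, b} \<in> T" unfolding adj_rel_def by auto
    show "p \<in> (adj_rel ?T)\<^sup>*"
    proof (cases "{a, b} = {u, w}")
      case True
      then have "(a = u \<and> b = w) \<or> (a = w \<and> b = u)" by (auto simp: doubleton_eq_iff)
      moreover have "(u, w) \<in> (adj_rel ?T)\<^sup>*" using a1 by (meson r_into_rtrancl rtrancl_trans)
      moreover have "(w, u) \<in> (adj_rel ?T)\<^sup>*" using a1 by (meson r_into_rtrancl rtrancl_trans)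
      ultimately show ?thesis using p by auto
    next
      case False
      then have "{a, b} \<in> ?T" using e by simp
      then have "(a, b) \<in> adj_rel ?T" unfolding adj_rel_def by simp
      thus ?thesis using p by simp
    qed
  qed
  have r: "(adj_rel T)\<^sup>* \<subseteq> (adj_rel ?T)\<^sup>*" using sub by (rule rtrancl_subset_rtrancl)
  have cg': "connected_graph (insert x W) ?T"
    unfolding connected_graph_def
  proof (intro conjI ballI)
    fix p q assume p: "p \<in> insert x W" and q: "q \<in> insert x W"
    have W: "\<And>p q. p \<in> W \<Longrightarrow> q \<in> W \<Longrightarrow> (p, q) \<in> (adj_rel ?T)\<^sup>*"
      using cg r unfolding connected_graph_def by blast
    show "(p, q) \<in> (adj_rel ?T)\<^sup>*"
    proof (cases "p = x")
      case True
      show ?thesis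
      proof (cases "q = x")
        case True thus ?thesis using \<open>p = x\<close> by simp
      next
        case False
        then have "q \<in> W" using q by simp
        thus ?thesis using True W[OF uW] a1(2) by (meson converse_rtrancl_into_rtrancl)
      qed
    next
      case False
      then have pW: "p \<in> W" using p by simp
      show ?thesis
      proof (cases "q = x")
        case True thus ?thesis using W[OF pW uW] a1(1) by (meson rtrancl_into_rtrancl)
      next
        case False thus ?thesis using W[OF pW] q by simp
      qed
    qed
  qed simp
  have nc': "\<not> has_cycle ?T"
  proof
    assume "has_cycle ?T"
    then obtain vs where l: "length vs \<ge> 3" "distinct vs" and c: "cyc ?T vs"
      unfolding has_cycle_iff by blast
    show False
    proof (cases "x \<in> set vs")
      case True
      then obtain ys where y: "length ys = length vs" "distinct ys" "cyc ?T ys" "ys!0 = x"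
        using rot_to_front[OF l c] by blast
      define n where "n = length ys"
      have n3: "n \<ge> 3" using y l n_def by simp
      have e1: "{x, ys!1} \<in> ?T" and e2: "{ys!(n - 1), x} \<in> ?T"
        using cyc_nbrs[OF y(3)] y(1,4) l(1) n_def by simp_all
      have "{x, ys!1} \<notin> T" using edges_avoid[OF sg x, of "{x, ys!1}"] by blast
      then have "{x, ys!1} = {x, u} \<or> {x, ys!1} = {x, w}" using e1 by blast
      then have a: "ys!1 = u \<or> ys!1 = w" using xu xw by (auto simp: doubleton_eq_iff)
      have "{ys!(n - 1), x} \<notin> T" using edges_avoid[OF sg x, of "{ys!(n - 1), x}"] by blast
      then have "{ys!(n - 1), x} = {x, u} \<or> {ys!(n - 1), x} = {x, w}" using e2 by blast
      then have b: "ys!(n - 1) = u \<or> ys!(n - 1) = w" using xu xw by (auto simp: doubleton_eq_iff)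
      have ab: "ys!1 \<noteq> ys!(n - 1)" using y(2) n3 n_def by (simp add: nth_eq_iff_index_eq)
      have abuw: "{ys!1, ys!(n - 1)} = {u, w}" using a b ab by auto
      have xnot: "\<And>j. 0 < j \<Longrightarrow> j < n \<Longrightarrow> ys!j \<noteq> x"
        using y(2,4) n_def by (metis gr_implies_not0 length_greater_0_conv list.size(3) nth_eq_iff_index_eq)
      have inner: "\<And>j. 0 < j \<Longrightarrow> Suc j < n \<Longrightarrow> {ys!j, ys!(Suc j)} \<in> T - {{u, w}}"
      proof -
        fix j assume j: "0 < j" "Suc j < n"
        have jn: "j < length ys" using j n_def by simp
        have "{ys!j, ys!(Suc j mod n)} \<in> ?T" using y(3) jn n_def unfolding cyc_def by blast
        then have e: "{ys!j, ys!(Suc j)} \<in> ?T" using j by simp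
        have "ys!j \<noteq> x" "ys!(Suc j) \<noteq> x" using xnot j by auto
        then have "x \<notin> {ys!j, ys!(Suc j)}" by simp
        then have "{ys!j, ys!(Suc j)} \<noteq> {x, u}" "{ys!j, ys!(Suc j)} \<noteq> {x, w}" by auto
        thus "{ys!j, ys!(Suc j)} \<in> T - {{u, w}}" using e by blast
      qed
      show False
      proof (cases "n = 3")
        case True
        have "{ys!1, ys!2} \<in> T - {{u, w}}" using inner[of 1] True by (simp add: numeral_2_eq_2)
        moreover have "{ys!1, ys!2} = {u, w}" using abuw True by simp
        ultimately show False by simp
      next
        case False
        then have n4: "n \<ge> 4" using n3 by simp
        define zs where "zs = tl ys"
        have lz: "length zs = n - 1" using zs_def n_def by simp
        have dz: "distinct zs" using y(2) zs_def by (simp add: distinct_tl)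
        have zn: "\<And>i. i < n - 1 \<Longrightarrow> zs!i = ys!(Suc i)" using zs_def n_def n3
          by (simp add: nth_tl)
        have "cyc T zs" unfolding cyc_def
        proof (intro allI impI)
          fix i assume i: "i < length zs"
          show "{zs!i, zs!(Suc i mod length zs)} \<in> T"
          proof (cases "Suc i < length zs")
            case True
            then have "Suc i mod length zs = Suc i" by simp
            moreover have "{ys!(Suc i), ys!(Suc (Suc i))} \<in> T - {{u, w}}"
              using inner[of "Suc i"] True lz by simp
            ultimately show ?thesis using zn True i lz by simp
          next
            case False
            then have si: "Suc i = n - 1" using i lz by simp
            then have "Suc i mod length zs = 0" using lz by simp
            moreover have "zs!i = ys!(n - 1)" using zn i lz si by simp
            moreover have "zs!0 = ys!1" using zn n3 by simp
            ultimately show ?thesis using abuw uw by (simp add: insert_commute)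
          qed
        qed
        moreover have "length zs \<ge> 3" using lz n4 by simp
        ultimately show False using nc dz unfolding has_cycle_iff by blast
      qed
    next
      case False
      have "cyc T vs"
      proof (rule cyc_mono[OF c])
        fix i assume i: "i < length vs" and e: "{vs!i, vs!(Suc i mod length vs)} \<in> ?T"
        have "0 < length vs" using i by linarith
        then have "Suc i mod length vs < length vs" by (rule mod_less_divisor)
        then have a: "vs!i \<in> set vs" "vs!(Suc i mod length vs) \<in> set vs" using i by (auto simp del: mod_less_divisor)
        then have "x \<notin> {vs!i, vs!(Suc i mod length vs)}" using False by auto
        then have "{vs!i, vs!(Suc i mod length vs)} \<noteq> {x, u}" "{vs!i, vs!(Suc i mod length vs)} \<noteq> {x, w}" by auto
        thus "{vs!i, vs!(Suc i mod length vs)} \<in> T" using e by blast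
      qed
      thus False using nc l unfolding has_cycle_iff by blast
    qed
  qed
  show ?thesis unfolding is_tree_def using sg' cg' nc' by blast
qed



lemma leaving_edge:
  assumes cg: "connected_graph V E" and WV: "W \<subseteq> V" and a: "a \<in> W" and b: "b \<in> V" "b \<notin> W"
  shows "\<exists>p q. {p, q} \<in> E \<and> p \<in> W \<and> q \<notin> W"
proof (rule ccontr)
  assume no: "\<not> ?thesis"
  have "(a, b) \<in> (adj_rel E)\<^sup>*" using cg a b WV unfolding connected_graph_def by blast
  then have "b \<in> W"
  proof (induction rule: rtrancl_induct)
    case base thus ?case using a .
  next
    case (step y z)
    then have "{y, z} \<in> E" unfolding adj_rel_def by simp
    thus ?case using step.IH no by blast
  qed
  thus False using b by simp
qed

lemma single_tree: "is_tree {v} {}"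
  unfolding is_tree_def simple_graph_def connected_graph_def has_cycle_def by auto

lemma grow_tree:
  assumes sg: "simple_graph V E" and cg: "connected_graph V E" and v: "v \<in> V"
  shows "n < card V \<Longrightarrow> \<exists>W T. W \<subseteq> V \<and> T \<subseteq> E \<and> is_tree W T \<and> card W = Suc n"
proof (induction n)
  case 0
  have "{v} \<subseteq> V" "{} \<subseteq> E" "card {v} = Suc 0" using v by auto
  thus ?case using single_tree[of v] by (intro exI[of _ "{v}"] exI[of _ "{}"]) simp
next
  case (Suc n)
  then obtain W T where W: "W \<subseteq> V" "T \<subseteq> E" "is_tree W T" "card W = Suc n" by auto
  have fV: "finite V" using sg unfolding simple_graph_def by simp
  have "W \<noteq> V" using W(4) Suc.prems by auto
  then obtain b where b: "b \<in> V" "b \<notin> W" using W(1) by blast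
  obtain a where a: "a \<in> W" using W(4) by (metis card.empty ex_in_conv nat.distinct(1))
  obtain p q where pq: "{p, q} \<in> E" "p \<in> W" "q \<notin> W" using leaving_edge[OF cg W(1) a b] by blast
  have qV: "q \<in> V" using edge_vertices[OF sg pq(1)] by simp
  have t: "is_tree (insert q W) (insert {q, p} T)" using leaf_tree[OF W(3) pq(2) pq(3)] .
  have "insert q W \<subseteq> V" using W(1) qV by simp
  moreover have "insert {q, p} T \<subseteq> E" using W(2) pq(1) by (simp add: insert_commute)
  moreover have "card (insert q W) = Suc (Suc n)" using W(4) pq(3) finite_subset[OF W(1) fV] by simp
  ultimately show ?case using t by blast
qed

lemma spanning_tree:
  assumes sg: "simple_graph V E" and cg: "connected_graph V E"
  shows "\<exists>T. T \<subseteq> E \<and> is_tree V T"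
proof -
  obtain v where v: "v \<in> V" using cg unfolding connected_graph_def by blast
  have fV: "finite V" using sg unfolding simple_graph_def by simp
  have "card V > 0" using fV v card_gt_0_iff by blast
  then obtain W T where W: "W \<subseteq> V" "T \<subseteq> E" "is_tree W T" "card W = Suc (card V - 1)"
    using grow_tree[OF sg cg v, of "card V - 1"] by auto
  have "W = V" using W(1,4) fV \<open>card V > 0\<close> by (simp add: card_subset_eq)
  thus ?thesis using W by blast
qed

lemma colouring_exists:
  assumes sg: "simple_graph V E" and cg: "connected_graph V E"
  shows "\<exists>k c. rainbow_3_colouring V E c k"
proof -
  have fV: "finite V" using sg unfolding simple_graph_def by simp
  have "E \<subseteq> Pow V"
  proof
    fix e assume "e \<in> E"
    then obtain a b where "e = {a, b}" "a \<in> V" "b \<in> V" using sg unfolding simple_graph_def by blast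
    thus "e \<in> Pow V" by simp
  qed
  then have fE: "finite E" using fV finite_subset by blast
  obtain f :: "'a set \<Rightarrow> nat" and n :: nat where f: "f ` E = {i. i < n}" "inj_on f E" using finite_imp_inj_to_nat_seg[OF fE] by blast
  obtain T where T: "T \<subseteq> E" "is_tree V T" using spanning_tree[OF sg cg] by blast
  have "rainbow_3_colouring V E f n"
    unfolding rainbow_3_colouring_def
  proof (intro conjI allI impI)
    show "f ` E \<subseteq> {..<n}" using f by auto
  next
    fix S assume "S \<subseteq> V \<and> card S = 3"
    thus "\<exists>W T. W \<subseteq> V \<and> T \<subseteq> E \<and> S \<subseteq> W \<and> is_tree W T \<and> inj_on f T"
      using T f(2) inj_on_subset[OF f(2) T(1)] by (intro exI[of _ V] exI[of _ T]) simp
  qed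
  thus ?thesis by blast
qed



lemma inj_insert_new: "inj_on f A \<Longrightarrow> f a \<notin> f ` A \<Longrightarrow> inj_on f (insert a A)"
proof -
  assume a: "inj_on f A" "f a \<notin> f ` A"
  then have "a \<notin> A" by auto
  then show ?thesis using a by simp
qed

lemma lift_ex:
  assumes "\<exists>W' T'. W' \<subseteq> A \<and> T' \<subseteq> B \<and> X \<subseteq> W' \<and> P W' T' \<and> Q T'" and "S \<subseteq> X"
  shows "\<exists>W' T'. W' \<subseteq> A \<and> T' \<subseteq> B \<and> S \<subseteq> W' \<and> P W' T' \<and> Q T'"
proof -
  from assms(1) obtain W' T' where h: "W' \<subseteq> A" "T' \<subseteq> B" "X \<subseteq> W'" "P W' T'" "Q T'" by blast
  have "S \<subseteq> W'" using h(3) assms(2) by (rule order_trans[rotated])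
  thus ?thesis using h by blast
qed

theorem corollary3:
  fixes V :: "'a set" and E :: "'a set set" and u w x :: 'a
  assumes "simple_graph V E"
    and "connected_graph V E"
    and "card V \<ge> 3"
    and "{u, w} \<in> E"
    and "x \<notin> V"
  shows "rx3 (subdivide_V V x) (subdivide_E E u w x) \<le> rx3 V E + 1"
proof -
  note sg = assms(1) and cg = assms(2) and cV = assms(3) and uwE = assms(4) and xV = assms(5)
  define k where "k = rx3 V E"
  have "\<exists>c. rainbow_3_colouring V E c k"
    unfolding k_def rx3_def by (rule LeastI_ex) (use colouring_exists[OF sg cg] in blast)
  then obtain c where kc: "rainbow_3_colouring V E c k" by blast
  have cE: "\<And>e. e \<in> E \<Longrightarrow> c e < k" using kc unfolding rainbow_3_colouring_def by auto
  have tr: "\<And>S. S \<subseteq> V \<Longrightarrow> card S = 3 \<Longrightarrow>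
        \<exists>W T. W \<subseteq> V \<and> T \<subseteq> E \<and> S \<subseteq> W \<and> is_tree W T \<and> inj_on c T"
    using kc unfolding rainbow_3_colouring_def by blast
  have uV: "u \<in> V" and wV: "w \<in> V" using edge_vertices[OF sg uwE] by auto
  have xu: "x \<noteq> u" and xw: "x \<noteq> w" using uV wV xV by auto
  have unw: "u \<noteq> w" using edge_ne[OF sg uwE] .
  have fV: "finite V" using sg unfolding simple_graph_def by simp
  define V' where "V' = insert x V"
  define E' where "E' = (E - {{u, w}}) \<union> {{x, u}, {x, w}}"
  define c' where "c' e = (if e = {x, w} then k else if e = {x, u} then c {u, w} else c e)" for e
  have cc: "\<And>e. e \<in> E \<Longrightarrow> c' e = c e"
  proof -
    fix e assume e: "e \<in> E"
    have "x \<notin> e" using edges_avoid[OF sg xV e] .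
    then have "e \<noteq> {x, w}" "e \<noteq> {x, u}" by auto
    thus "c' e = c e" unfolding c'_def by simp
  qed
  have c'xw: "c' {x, w} = k" unfolding c'_def by simp
  have c'xu: "c' {x, u} = c {u, w}" unfolding c'_def using xu xw unw by (auto simp: doubleton_eq_iff)
  have P1: "\<exists>W' T'. W' \<subseteq> V' \<and> T' \<subseteq> E' \<and> insert x W \<subseteq> W' \<and> is_tree W' T' \<and> inj_on c' T'"
    if W: "W \<subseteq> V" "T \<subseteq> E" "is_tree W T" "inj_on c T" and uwT: "{u, w} \<in> T" for W T
  proof -
    let ?T = "(T - {{u, w}}) \<union> {{x, u}, {x, w}}"
    have xW: "x \<notin> W" using W(1) xV by auto
    have t: "is_tree (insert x W) ?T" using sub_tree[OF W(3) uwT xW] .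
    have s1: "insert x W \<subseteq> V'" using W(1) unfolding V'_def by auto
    have s2: "?T \<subseteq> E'" using W(2) unfolding E'_def by auto
    have eq: "?T = insert {x, u} (insert {x, w} (T - {{u, w}}))" by auto
    have i1: "inj_on c (T - {{u, w}})" using W(4) by (rule inj_on_subset) auto
    have eqc: "\<And>e. e \<in> T - {{u, w}} \<Longrightarrow> c' e = c e" using cc W(2) by blast
    have i2: "inj_on c' (T - {{u, w}})" using inj_on_cong[of "T - {{u, w}}" c' c] eqc i1 by simp
    have "c' {x, w} \<notin> c' ` (T - {{u, w}})"
    proof
      assume "c' {x, w} \<in> c' ` (T - {{u, w}})"
      then obtain e where e0: "e \<in> T - {{u, w}}" and e1: "c' {x, w} = c' e" by (rule imageE)
      have e: "e \<in> T - {{u, w}}" "c' e = k" using e0 e1 c'xw by simp_all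
      have "e \<in> E" using e W(2) by auto
      then have "c e < k" "c' e = c e" using cE cc by auto
      thus False using e(2) by simp
    qed
    then have i3: "inj_on c' (insert {x, w} (T - {{u, w}}))" using i2 by (rule inj_insert_new[rotated])
    have "c' {x, u} \<notin> c' ` (insert {x, w} (T - {{u, w}}))"
    proof
      assume "c' {x, u} \<in> c' ` (insert {x, w} (T - {{u, w}}))"
      then obtain e where e0: "e \<in> insert {x, w} (T - {{u, w}})" and e1: "c' {x, u} = c' e" by (rule imageE)
      have e: "e \<in> insert {x, w} (T - {{u, w}})" "c' e = c {u, w}" using e0 e1 c'xu by simp_all
      show False
      proof (cases "e = {x, w}")
        case True
        then have "c {u, w} = k" using e c'xw by simp
        thus False using cE[OF uwE] by simp
      next
        case False
        then have eT: "e \<in> T" "e \<noteq> {u, w}" using e by auto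
        then have "c e = c {u, w}" using e(2) cc W(2) by auto
        thus False using W(4) eT uwT by (meson inj_onD)
      qed
    qed
    then have "inj_on c' (insert {x, u} (insert {x, w} (T - {{u, w}})))" using i3 by (rule inj_insert_new[rotated])
    then have "inj_on c' ?T" using eq by simp
    thus ?thesis using t s1 s2 by (intro exI[of _ "insert x W"] exI[of _ ?T]) simp
  qed
  have P2: "T \<subseteq> E' \<and> inj_on c' T"
    if W: "T \<subseteq> E" "inj_on c T" and uwT: "{u, w} \<notin> T" for T
  proof
    show "T \<subseteq> E'" using W(1) uwT unfolding E'_def by auto
    have eqc: "\<And>e. e \<in> T \<Longrightarrow> c' e = c e" using cc W(1) by blast
    show "inj_on c' T" using inj_on_cong[of T c' c] eqc W(2) by simp
  qed
  have P3: "\<exists>W' T'. W' \<subseteq> V' \<and> T' \<subseteq> E' \<and> insert x W \<subseteq> W' \<and> is_tree W' T' \<and> inj_on c' T'"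
    if W: "W \<subseteq> V" "T \<subseteq> E" "is_tree W T" "inj_on c T" and uwT: "{u, w} \<notin> T" and wW: "w \<in> W" for W T
  proof -
    have xW: "x \<notin> W" using W(1) xV by auto
    have t: "is_tree (insert x W) (insert {x, w} T)" using leaf_tree[OF W(3) wW xW] .
    have p2: "T \<subseteq> E' \<and> inj_on c' T" using P2[OF W(2,4) uwT] .
    have "c' {x, w} \<notin> c' ` T"
    proof
      assume "c' {x, w} \<in> c' ` T"
      then obtain e where e0: "e \<in> T" and e1: "c' {x, w} = c' e" by (rule imageE)
      have e: "e \<in> T" "c' e = k" using e0 e1 c'xw by simp_all
      have "e \<in> E" using e W(2) by auto
      then have "c e < k" "c' e = c e" using cE cc by auto
      thus False using e(2) by simp
    qed
    then have "inj_on c' (insert {x, w} T)" using p2 by (intro inj_insert_new) auto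
    moreover have "insert {x, w} T \<subseteq> E'" using p2 unfolding E'_def by auto
    moreover have "insert x W \<subseteq> V'" using W(1) unfolding V'_def by auto
    ultimately show ?thesis using t by (intro exI[of _ "insert x W"] exI[of _ "insert {x, w} T"]) simp
  qed
  have col: "rainbow_3_colouring V' E' c' (k + 1)"
    unfolding rainbow_3_colouring_def
  proof (intro conjI allI impI)
    show "c' ` E' \<subseteq> {..<k + 1}"
    proof
      fix y assume "y \<in> c' ` E'"
      then obtain e where e: "e \<in> E'" "y = c' e" by auto
      then consider "e = {x, u}" | "e = {x, w}" | "e \<in> E" unfolding E'_def by blast
      thus "y \<in> {..<k + 1}"
      proof cases
        case 1 thus ?thesis using e c'xu cE[OF uwE] by simp
      next
        case 2 thus ?thesis using e c'xw by simp
      next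
        case 3
        then have "c e < k" "c' e = c e" using cE cc by auto
        thus ?thesis using e(2) by simp
      qed
    qed
  next
    fix S assume S: "S \<subseteq> V' \<and> card S = 3"
    show "\<exists>W T. W \<subseteq> V' \<and> T \<subseteq> E' \<and> S \<subseteq> W \<and> is_tree W T \<and> inj_on c' T"
    proof (cases "x \<in> S")
      case False
      then have SV: "S \<subseteq> V" using S unfolding V'_def by auto
      have cS: "card S = 3" using S by simp
      obtain W T where W: "W \<subseteq> V" "T \<subseteq> E" "S \<subseteq> W" "is_tree W T" "inj_on c T"
        using tr[OF SV cS] by blast
      show ?thesis
      proof (cases "{u, w} \<in> T")
        case True
        have "S \<subseteq> insert x W" using W(3) by auto
        with P1[OF W(1,2,4,5) True] show ?thesis by (rule lift_ex)
      next
        case False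
        then have "T \<subseteq> E' \<and> inj_on c' T" using P2[OF W(2,5)] by blast
        moreover have "W \<subseteq> V'" using W(1) unfolding V'_def by auto
        ultimately show ?thesis using W(3,4) by (intro exI[of _ W] exI[of _ T]) simp
      qed
    next
      case True
      define S0 where "S0 = S - {x}"
      have fS: "finite S" using S by (metis card.infinite zero_neq_numeral)
      have cS0: "card S0 = 2" using S True fS unfolding S0_def by simp
      have S0V: "S0 \<subseteq> V" using S unfolding S0_def V'_def by auto
      have fS0: "finite S0" using fS unfolding S0_def by simp
      obtain S1 where S1: "S1 \<subseteq> V" "card S1 = 3" "insert w S0 \<subseteq> S1"
      proof (cases "w \<in> S0")
        case False
        have "insert w S0 \<subseteq> V" using S0V wV by simp
        moreover have "card (insert w S0) = 3" using False cS0 fS0 by simp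
        moreover have "insert w S0 \<subseteq> insert w S0" by auto
        ultimately show ?thesis by (rule that[of "insert w S0"])
      next
        case True
        have "\<not> V \<subseteq> S0"
        proof
          assume "V \<subseteq> S0"
          then have "card V \<le> card S0" using card_mono[OF fS0] by blast
          thus False using cS0 cV by simp
        qed
        then obtain v where v: "v \<in> V" "v \<notin> S0" by blast
        have "insert v S0 \<subseteq> V" using S0V v(1) by simp
        moreover have "card (insert v S0) = 3" using v cS0 fS0 by simp
        moreover have "insert w S0 \<subseteq> insert v S0" using True by auto
        ultimately show ?thesis by (rule that[of "insert v S0"])
      qed
      then obtain W T where W: "W \<subseteq> V" "T \<subseteq> E" "S1 \<subseteq> W" "is_tree W T" "inj_on c T"
        using tr[OF S1(1,2)] by blast
      have S0W: "insert w S0 \<subseteq> W" using S1(3) W(3) by (rule order_trans)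
      have wW: "w \<in> W" using S0W by simp
      have "S0 \<subseteq> W" using S0W by simp
      then have SW: "S \<subseteq> insert x W" unfolding S0_def by blast
      show ?thesis
      proof (cases "{u, w} \<in> T")
        case True
        from P1[OF W(1,2,4,5) True] SW show ?thesis by (rule lift_ex)
      next
        case False
        from P3[OF W(1,2,4,5) False wW] SW show ?thesis by (rule lift_ex)
      qed
    qed
  qed
  have fin: "rx3 V' E' \<le> k + 1" unfolding rx3_def by (rule Least_le, rule exI[of _ c'], rule col)
  have eq1: "subdivide_V V x = V'" unfolding V'_def subdivide_V_def by (rule refl)
  have eq2: "subdivide_E E u w x = E'" unfolding E'_def subdivide_E_def by (rule refl)
  show ?thesis unfolding eq1 eq2 k_def[symmetric] by (rule fin)
qed


end
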